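(* Let $G$ be a graph with at least one edge and let $x$ be a non-isolated vertex of $G$. Then there exists a Grundy total dominating sequence of $G$ that contains $x$.
   Context: For a graph $G$, $N(v)$ denotes the open neighborhood of $v$. A sequence $(v_1,\ldots,v_k)$ of distinct vertices is an open neighborhood sequence if $N(v_i)\setminus\bigcup_{j=1}^{i-1}N(v_j)\neq\emptyset$ for each $i\in[k]$. A Grundy total dominating sequence is an open neighborhood sequence of maximum possible length in $G$. *)

theory Defs
  imports Main
begin

definition graph :: "'a set \<Rightarrow> ('a \<Rightarrow> 'a \<Rightarrow> bool) \<Rightarrow> bool" where
  "graph V E \<longleftrightarrow> finite V \<and> (\<forall>u v. E u v \<longrightarrow> u \<in> V \<and> v \<in> V)
      \<and> (\<forall>u v. E u v \<longrightarrow> E v u) \<and> (\<forall>v. \<not> E v v)"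

definition nbhd :: "('a \<Rightarrow> 'a \<Rightarrow> bool) \<Rightarrow> 'a \<Rightarrow> 'a set" where
  "nbhd E v = {u. E v u}"

definition open_nbhd_seq :: "'a set \<Rightarrow> ('a \<Rightarrow> 'a \<Rightarrow> bool) \<Rightarrow> 'a list \<Rightarrow> bool" where
  "open_nbhd_seq V E s \<longleftrightarrow> distinct s \<and> set s \<subseteq> V \<and>
     (\<forall>i < length s. nbhd E (s ! i) - (\<Union>j<i. nbhd E (s ! j)) \<noteq> {})"

definition grundy_total_dom_seq :: "'a set \<Rightarrow> ('a \<Rightarrow> 'a \<Rightarrow> bool) \<Rightarrow> 'a list \<Rightarrow> bool" where
  "grundy_total_dom_seq V E s \<longleftrightarrow> open_nbhd_seq V E s \<and>
     (\<forall>t. open_nbhd_seq V E t \<longrightarrow> length t \<le> length s)"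

end

theory Submission
  imports Defs
begin

lemma ons_len_bound:
  assumes "finite V" "open_nbhd_seq V E t" shows "length t \<le> card V"
proof -
  have "distinct t" "set t \<subseteq> V" using assms(2) unfolding open_nbhd_seq_def by auto
  then show ?thesis using assms(1) by (metis card_mono distinct_card)
qed

lemma gtds_exists:
  assumes "finite V" shows "\<exists>s. grundy_total_dom_seq V E s"
proof -
  let ?L = "length ` {t. open_nbhd_seq V E t}"
  have fin: "finite ?L"
    by (rule finite_subset[of _ "{..card V}"]) (auto dest: ons_len_bound[OF assms])
  have ne: "[] \<in> {t. open_nbhd_seq V E t}" by (simp add: open_nbhd_seq_def)
  hence "Max ?L \<in> ?L" using fin by (intro Max_in) auto
  then obtain s where s: "open_nbhd_seq V E s" "length s = Max ?L" by auto
  have "\<forall>t. open_nbhd_seq V E t \<longrightarrow> length t \<le> length s"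
    using fin s(2) by auto
  thus ?thesis using s(1) unfolding grundy_total_dom_seq_def by blast
qed

theorem proposition5p1:
  fixes V :: "'a set" and E :: "'a \<Rightarrow> 'a \<Rightarrow> bool" and x :: 'a
  assumes "graph V E"
    and "\<exists>u v. E u v"
    and "x \<in> V"
    and "\<exists>y. E x y"
  shows "\<exists>s. grundy_total_dom_seq V E s \<and> x \<in> set s"
proof -
  have finV: "finite V" using assms(1) unfolding graph_def by auto
  obtain s where gs: "grundy_total_dom_seq V E s" using gtds_exists[OF finV] by blast
  show ?thesis
  proof (cases "x \<in> set s")
    case True thus ?thesis using gs by blast
  next
    case False
    have ons: "open_nbhd_seq V E s" and mx: "\<And>t. open_nbhd_seq V E t \<Longrightarrow> length t \<le> length s"
      using gs unfolding grundy_total_dom_seq_def by auto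
    have ds: "distinct s" and ss: "set s \<subseteq> V"
      and fp: "\<And>i. i < length s \<Longrightarrow> nbhd E (s ! i) - (\<Union>j<i. nbhd E (s ! j)) \<noteq> {}"
      using ons unfolding open_nbhd_seq_def by auto
    define k where "k = length s"
    define U where "U m = (\<Union>j<m. nbhd E (s ! j))" for m
    define P where "P m \<longleftrightarrow> nbhd E x \<subseteq> U m" for m
    have Pk: "P k"
    proof (rule ccontr)
      assume "\<not> P k"
      have "open_nbhd_seq V E (s @ [x])"
        unfolding open_nbhd_seq_def
      proof (intro conjI allI impI)
        show "distinct (s @ [x])" using ds False by simp
        show "set (s @ [x]) \<subseteq> V" using ss assms(3) by simp
        fix i assume i: "i < length (s @ [x])"
        show "nbhd E ((s @ [x]) ! i) - (\<Union>j<i. nbhd E ((s @ [x]) ! j)) \<noteq> {}"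
        proof (cases "i < length s")
          case True
          have "(\<Union>j<i. nbhd E ((s @ [x]) ! j)) = (\<Union>j<i. nbhd E (s ! j))"
            using True by (auto simp: nth_append)
          thus ?thesis using fp[OF True] True by (simp add: nth_append)
        next
          case False
          hence ik: "i = length s" using i by simp
          have "(\<Union>j<i. nbhd E ((s @ [x]) ! j)) = U k"
            using ik by (auto simp: nth_append U_def k_def)
          thus ?thesis using \<open>\<not> P k\<close> ik by (auto simp: P_def)
        qed
      qed
      from mx[OF this] show False by simp
    qed
    have nP0: "\<not> P 0" using assms(4) by (auto simp: P_def U_def nbhd_def)
    define m0 where "m0 = (LEAST m. P m)"
    have Pm0: "P m0" unfolding m0_def by (rule LeastI[of P k, OF Pk])
    have m0k: "m0 \<le> k" unfolding m0_def by (rule Least_le[of P k, OF Pk])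
    have m0pos: "m0 > 0" using Pm0 nP0 by (cases m0) auto
    define i where "i = m0 - 1"
    have ik: "i < k" using m0k m0pos i_def by simp
    have PSi: "P (Suc i)" using Pm0 m0pos i_def by simp
    have nPi: "\<not> P i" using not_less_Least[of i P] m0pos unfolding m0_def i_def by simp
    define t where "t = s[i := x]"
    have lt: "length t = length s" by (simp add: t_def)
    have tnth: "\<And>j. j < k \<Longrightarrow> t ! j = (if j = i then x else s ! j)"
      using ik by (simp add: t_def k_def nth_list_update)
    have "open_nbhd_seq V E t"
      unfolding open_nbhd_seq_def
    proof (intro conjI allI impI)
      show "distinct t" unfolding t_def using ds False by (auto intro: distinct_list_update)
      show "set t \<subseteq> V" unfolding t_def using ss assms(3) set_update_subset_insert by fastforce
      fix l assume l: "l < length t"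
      hence lk: "l < k" using lt k_def by simp
      show "nbhd E (t ! l) - (\<Union>j<l. nbhd E (t ! j)) \<noteq> {}"
      proof (cases "l \<le> i")
        case True
        have pre: "(\<Union>j<l. nbhd E (t ! j)) = U l"
          unfolding U_def using True lk by (auto simp: tnth)
        show ?thesis
        proof (cases "l = i")
          case True
          thus ?thesis using pre nPi tnth[OF lk] by (auto simp: P_def)
        next
          case False
          thus ?thesis using pre fp[of l] lk tnth[OF lk] \<open>l \<le> i\<close> by (auto simp: U_def k_def)
        qed
      next
        case False
        obtain w where w: "w \<in> nbhd E (s ! l)" "w \<notin> U l"
          using fp[of l] lk by (auto simp: U_def k_def)
        have "U (Suc i) \<subseteq> U l" using False by (force simp: U_def)
        hence wx: "w \<notin> nbhd E x" using PSi w(2) by (auto simp: P_def)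
        have "w \<notin> (\<Union>j<l. nbhd E (t ! j))"
        proof
          assume "w \<in> (\<Union>j<l. nbhd E (t ! j))"
          then obtain j where j: "j < l" "w \<in> nbhd E (t ! j)" by auto
          show False
          proof (cases "j = i")
            case True thus False using j tnth[of j] lk wx by simp
          next
            case False thus False using j tnth[of j] lk w(2) by (auto simp: U_def)
          qed
        qed
        moreover have "t ! l = s ! l" using tnth[OF lk] False by simp
        ultimately show ?thesis using w(1) by auto
      qed
    qed
    hence "grundy_total_dom_seq V E t"
      using mx lt unfolding grundy_total_dom_seq_def by simp
    moreover have "x \<in> set t" unfolding t_def using ik k_def by (simp add: set_update_memI)
    ultimately show ?thesis by blast
  qed
qed

end
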